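(* Let $A,K$ be algebras and $\xi:A\to\mathrm{Out}(K)$ a coupling admitting at least one bimultiplication law covering it. Then the cohomology class of $f(\mu,h)$ in the Hochschild cohomology $HH^3(A,\mathrm{Anni}K)$ (with coefficients in the $A$-bimodule $\mathrm{Anni}K$ determined by $\xi$) is independent of the choice of the bimultiplication law $\mu$ covering $\xi$ and of the hindrance $h$ of $\mu$. This class is denoted $\mathrm{Obs}(\xi)$ (the obstruction of $\xi$).
   Context: All algebras are associative, not necessarily unital, over a field $\mathbb F$. For an algebra $K$, a bimultiplication of $K$ is a pair $(u,v)$ of linear maps $K\to K$ with $k_1u(k_2)=v(k_1)k_2$, $u(k_1k_2)=u(k_1)k_2$, $v(k_1k_2)=k_1v(k_2)$; these form an algebra $\mathrm{Mul}(K)$ with product $(u_1,v_1)(u_2,v_2)=(u_1\circ u_2,\ v_2\circ v_1)$. $\epsilon:K\to\mathrm{Mul}(K)$, $\epsilon(k_0)=(k\mapsto k_0k,\ k\mapsto kk_0)$; $\mathrm{Inn}(K)=\epsilon(K)$, $\mathrm{Out}(K)=\mathrm{Mul}(K)/\mathrm{Inn}(K)$ with projection $\natural$; $\mathrm{Anni}K=\{k: kK=0=Kk\}$. A coupling is an algebra homomorphism $\xi:A\to\mathrm{Out}(K)$. A bimultiplication law covering $\xi$ is a linear map $\mu:A\to\mathrm{Mul}(K)$, $\mu(a)=(u_a,v_a)$, with $\natural\circ\mu=\xi$ and $u_av_b=v_bu_a$ for all $a,b\in A$; then $\mathrm{Anni}K$ is an $A$-bimodule via $a\cdot n=u_a(n)$,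 $n\cdot a=v_a(n)$, independent of the choice of $\mu$. Curvature: $R^\mu(a_1,a_2)=\mu(a_1)\mu(a_2)-\mu(a_1a_2)$. A hindrance is a bilinear $h:A\times A\to K$ with $\epsilon\circ h=R^\mu$. $f(\mu,h)(a_1,a_2,a_3)=u_{a_1}h(a_2,a_3)-h(a_1a_2,a_3)+h(a_1,a_2a_3)-v_{a_3}h(a_1,a_2)$; it is a Hochschild $3$-cocycle with values in $\mathrm{Anni}K$. Hochschild cochains $C^n(A,N)$ are $n$-linear maps $A^n\to N$ with differential $\delta g(a_1,\dots,a_{n+1})=a_1g(a_2,\dots)+\sum_{i=1}^n(-1)^ig(\dots,a_ia_{i+1},\dots)+(-1)^{n+1}g(a_1,\dots,a_n)a_{n+1}$. *)

theory Defs
  imports Complex_Main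
begin

(* An associative, not necessarily unital, algebra over a field 'f is modelled as a
   type 'a of class ring (Isabelle's class ring = associative, distributive,
   additive group, NO unit required) together with a scalar multiplication
   s :: 'f \<Rightarrow> 'a \<Rightarrow> 'a making it an 'f-vector space, such that the product is bilinear. *)
definition algebra_over :: "('f::field \<Rightarrow> 'a::ring \<Rightarrow> 'a) \<Rightarrow> bool" where
  "algebra_over s \<longleftrightarrow> vector_space s \<and>
     (\<forall>c x y. s c (x * y) = s c x * y \<and> s c (x * y) = x * s c y)"

type_synonym 'k bimul = "('k \<Rightarrow> 'k) \<times> ('k \<Rightarrow> 'k)"

definition is_bimul :: "('f::field \<Rightarrow> 'k::ring \<Rightarrow> 'k) \<Rightarrow> 'k bimul \<Rightarrow> bool" where
  "is_bimul sK m \<longleftrightarrow> Vector_Spaces.linear sK sK (fst m) \<and> Vector_Spaces.linear sK sK (snd m) \<and>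
     (\<forall>k1 k2. k1 * fst m k2 = snd m k1 * k2) \<and>
     (\<forall>k1 k2. fst m (k1 * k2) = fst m k1 * k2) \<and>
     (\<forall>k1 k2. snd m (k1 * k2) = k1 * snd m k2)"

definition Mul :: "('f::field \<Rightarrow> 'k::ring \<Rightarrow> 'k) \<Rightarrow> 'k bimul set" where
  "Mul sK = {m. is_bimul sK m}"

definition mul_add :: "'k::ring bimul \<Rightarrow> 'k bimul \<Rightarrow> 'k bimul" where
  "mul_add m1 m2 = (\<lambda>k. fst m1 k + fst m2 k, \<lambda>k. snd m1 k + snd m2 k)"

definition mul_diff :: "'k::ring bimul \<Rightarrow> 'k bimul \<Rightarrow> 'k bimul" where
  "mul_diff m1 m2 = (\<lambda>k. fst m1 k - fst m2 k, \<lambda>k. snd m1 k - snd m2 k)"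

definition mul_scale :: "('f \<Rightarrow> 'k::ring \<Rightarrow> 'k) \<Rightarrow> 'f \<Rightarrow> 'k bimul \<Rightarrow> 'k bimul" where
  "mul_scale sK c m = (\<lambda>k. sK c (fst m k), \<lambda>k. sK c (snd m k))"

definition mul_mult :: "'k::ring bimul \<Rightarrow> 'k bimul \<Rightarrow> 'k bimul" where
  "mul_mult m1 m2 = (fst m1 \<circ> fst m2, snd m2 \<circ> snd m1)"

(* epsilon, Inn, natural projection onto Out = Mul / Inn (elements of Out are cosets) *)
definition eps :: "'k::ring \<Rightarrow> 'k bimul" where
  "eps k0 = (\<lambda>k. k0 * k, \<lambda>k. k * k0)"

definition Inn :: "'k::ring bimul set" where
  "Inn = range eps"

definition natural :: "'k::ring bimul \<Rightarrow> 'k bimul set" where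
  "natural m = {mul_add m i | i. i \<in> Inn}"

definition Out :: "('f::field \<Rightarrow> 'k::ring \<Rightarrow> 'k) \<Rightarrow> 'k bimul set set" where
  "Out sK = natural ` Mul sK"

definition Anni :: "'k::ring set" where
  "Anni = {k. \<forall>x. k * x = 0 \<and> x * k = 0}"

(* coupling: algebra homomorphism xi : A \<rightarrow> Out(K), where the algebra operations on
   Out(K) = Mul(K)/Inn(K) are those induced from representatives *)
definition coupling ::
  "('f::field \<Rightarrow> 'a::ring \<Rightarrow> 'a) \<Rightarrow> ('f \<Rightarrow> 'k::ring \<Rightarrow> 'k) \<Rightarrow> ('a \<Rightarrow> 'k bimul set) \<Rightarrow> bool" where
  "coupling sA sK xi \<longleftrightarrow> (\<forall>a. xi a \<in> Out sK) \<and>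
     (\<forall>a b m1 m2. m1 \<in> xi a \<longrightarrow> m2 \<in> xi b \<longrightarrow>
        natural (mul_add m1 m2) = xi (a + b) \<and> natural (mul_mult m1 m2) = xi (a * b)) \<and>
     (\<forall>c a m. m \<in> xi a \<longrightarrow> natural (mul_scale sK c m) = xi (sA c a))"

definition bimul_law ::
  "('f::field \<Rightarrow> 'a::ring \<Rightarrow> 'a) \<Rightarrow> ('f \<Rightarrow> 'k::ring \<Rightarrow> 'k) \<Rightarrow> ('a \<Rightarrow> 'k bimul set)
     \<Rightarrow> ('a \<Rightarrow> 'k bimul) \<Rightarrow> bool" where
  "bimul_law sA sK xi mu \<longleftrightarrow>
     (\<forall>a. mu a \<in> Mul sK) \<and>
     (\<forall>a b. mu (a + b) = mul_add (mu a) (mu b)) \<and>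
     (\<forall>c a. mu (sA c a) = mul_scale sK c (mu a)) \<and>
     (\<forall>a. natural (mu a) = xi a) \<and>
     (\<forall>a b. fst (mu a) \<circ> snd (mu b) = snd (mu b) \<circ> fst (mu a))"

definition curvature :: "('a::ring \<Rightarrow> 'k::ring bimul) \<Rightarrow> 'a \<Rightarrow> 'a \<Rightarrow> 'k bimul" where
  "curvature mu a1 a2 = mul_diff (mul_mult (mu a1) (mu a2)) (mu (a1 * a2))"

definition bilinear_map ::
  "('f::field \<Rightarrow> 'a::ab_group_add \<Rightarrow> 'a) \<Rightarrow> ('f \<Rightarrow> 'n::ab_group_add \<Rightarrow> 'n) \<Rightarrow> ('a \<Rightarrow> 'a \<Rightarrow> 'n) \<Rightarrow> bool" where
  "bilinear_map sA sN g \<longleftrightarrow> (\<forall>x. Vector_Spaces.linear sA sN (g x)) \<and> (\<forall>y. Vector_Spaces.linear sA sN (\<lambda>x. g x y))"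

definition hindrance ::
  "('f::field \<Rightarrow> 'a::ring \<Rightarrow> 'a) \<Rightarrow> ('f \<Rightarrow> 'k::ring \<Rightarrow> 'k) \<Rightarrow> ('a \<Rightarrow> 'k bimul)
     \<Rightarrow> ('a \<Rightarrow> 'a \<Rightarrow> 'k) \<Rightarrow> bool" where
  "hindrance sA sK mu h \<longleftrightarrow> bilinear_map sA sK h \<and>
     (\<forall>a1 a2. eps (h a1 a2) = curvature mu a1 a2)"

definition obs_cochain :: "('a::ring \<Rightarrow> 'k::ring bimul) \<Rightarrow> ('a \<Rightarrow> 'a \<Rightarrow> 'k) \<Rightarrow> 'a \<Rightarrow> 'a \<Rightarrow> 'a \<Rightarrow> 'k" where
  "obs_cochain mu h a1 a2 a3 =
     fst (mu a1) (h a2 a3) - h (a1 * a2) a3 + h a1 (a2 * a3) - snd (mu a3) (h a1 a2)"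

definition hoch_C2 ::
  "('f::field \<Rightarrow> 'a::ring \<Rightarrow> 'a) \<Rightarrow> ('f \<Rightarrow> 'k::ring \<Rightarrow> 'k) \<Rightarrow> ('a \<Rightarrow> 'a \<Rightarrow> 'k) set" where
  "hoch_C2 sA sK = {g. bilinear_map sA sK g \<and> (\<forall>a1 a2. g a1 a2 \<in> Anni)}"

(* Hochschild differential C^2 \<rightarrow> C^3, bimodule structure a.n = u_a n, n.a = v_a n *)
definition hoch_delta2 :: "('a::ring \<Rightarrow> 'k::ring bimul) \<Rightarrow> ('a \<Rightarrow> 'a \<Rightarrow> 'k) \<Rightarrow> 'a \<Rightarrow> 'a \<Rightarrow> 'a \<Rightarrow> 'k" where
  "hoch_delta2 mu g a1 a2 a3 =
     fst (mu a1) (g a2 a3) - g (a1 * a2) a3 + g a1 (a2 * a3) - snd (mu a3) (g a1 a2)"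

definition same_HH3_class ::
  "('f::field \<Rightarrow> 'a::ring \<Rightarrow> 'a) \<Rightarrow> ('f \<Rightarrow> 'k::ring \<Rightarrow> 'k) \<Rightarrow> ('a \<Rightarrow> 'k bimul)
     \<Rightarrow> ('a \<Rightarrow> 'a \<Rightarrow> 'a \<Rightarrow> 'k) \<Rightarrow> ('a \<Rightarrow> 'a \<Rightarrow> 'a \<Rightarrow> 'k) \<Rightarrow> bool" where
  "same_HH3_class sA sK mu f1 f2 \<longleftrightarrow>
     (\<exists>g \<in> hoch_C2 sA sK. \<forall>a1 a2 a3. f1 a1 a2 a3 - f2 a1 a2 a3 = hoch_delta2 mu g a1 a2 a3)"

end

theory Submission
  imports Defs
begin

lemma lift_linear:
  fixes sA :: "'f::field \<Rightarrow> 'a::ring \<Rightarrow> 'a" and sK :: "'f \<Rightarrow> 'k::ring \<Rightarrow> 'k"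
    and d1 d2 :: "'a \<Rightarrow> 'k \<Rightarrow> 'k"
  assumes A: "algebra_over sA" and K: "algebra_over sK"
    and d1_add: "\<And>a b x. d1 (a + b) x = d1 a x + d1 b x"
    and d1_scale: "\<And>c a x. d1 (sA c a) x = sK c (d1 a x)"
    and d2_add: "\<And>a b x. d2 (a + b) x = d2 a x + d2 b x"
    and d2_scale: "\<And>c a x. d2 (sA c a) x = sK c (d2 a x)"
    and ex: "\<And>a. \<exists>k. \<forall>x. k * x = d1 a x \<and> x * k = d2 a x"
  shows "\<exists>t. Vector_Spaces.linear sA sK t \<and> (\<forall>a x. t a * x = d1 a x \<and> x * t a = d2 a x)"
proof -
  have vA: "vector_space sA" and vK: "vector_space sK"
    using A K unfolding algebra_over_def by auto
  have Kscl1: "\<And>c x y. sK c x * y = sK c (x * y)" and Kscl2: "\<And>c x y. x * sK c y = sK c (x * y)"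
    using K unfolding algebra_over_def by metis+
  interpret vA: vector_space sA by (rule vA)
  interpret vK: vector_space sK by (rule vK)
  interpret p: vector_space_pair sA sK by unfold_locales
  obtain B where B: "vA.independent B" "UNIV \<subseteq> vA.span B"
    using vA.basis_exists[of UNIV] by blast
  define kf where "kf = (\<lambda>a. SOME k. \<forall>x. k * x = d1 a x \<and> x * k = d2 a x)"
  have kf: "\<And>a x. kf a * x = d1 a x \<and> x * kf a = d2 a x"
    unfolding kf_def using someI_ex[OF ex] by blast
  define t where "t = p.construct B kf"
  have lt: "Vector_Spaces.linear sA sK t" unfolding t_def by (rule p.linear_construct[OF B(1)])
  have tB: "\<And>b. b \<in> B \<Longrightarrow> t b = kf b" unfolding t_def by (rule p.construct_basis[OF B(1)])
  have tadd: "\<And>a b. t (a + b) = t a + t b" and tscl: "\<And>c a. t (sA c a) = sK c (t a)"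
    using lt unfolding Vector_Spaces.linear_iff by auto
  have "t a * x = d1 a x \<and> x * t a = d2 a x" for a x
  proof
    have l1: "Vector_Spaces.linear sA sK (\<lambda>a. t a * x)"
      unfolding Vector_Spaces.linear_iff using vA vK by (simp add: tadd tscl distrib_right Kscl1 Kscl2)
    have l2: "Vector_Spaces.linear sA sK (\<lambda>a. d1 a x)"
      unfolding Vector_Spaces.linear_iff using vA vK by (simp add: d1_add d1_scale)
    show "t a * x = d1 a x"
      by (rule p.linear_eq_on[OF l1 l2, of a B]) (use B tB kf in auto)
    have l3: "Vector_Spaces.linear sA sK (\<lambda>a. x * t a)"
      unfolding Vector_Spaces.linear_iff using vA vK by (simp add: tadd tscl distrib_left Kscl1 Kscl2)
    have l4: "Vector_Spaces.linear sA sK (\<lambda>a. d2 a x)"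
      unfolding Vector_Spaces.linear_iff using vA vK by (simp add: d2_add d2_scale)
    show "x * t a = d2 a x"
      by (rule p.linear_eq_on[OF l3 l4, of a B]) (use B tB kf in auto)
  qed
  then show ?thesis using lt by blast
qed

lemma key_identity:
  fixes u v :: "'a::ring \<Rightarrow> 'k::ring \<Rightarrow> 'k" and h :: "'a \<Rightarrow> 'a \<Rightarrow> 'k" and t :: "'a \<Rightarrow> 'k"
  assumes u_add: "\<And>a x y. u a (x + y) = u a x + u a y"
    and u_diff: "\<And>a x y. u a (x - y) = u a x - u a y"
    and v_add: "\<And>a x y. v a (x + y) = v a x + v a y"
    and v_diff: "\<And>a x y. v a (x - y) = v a x - v a y"
    and u_mult: "\<And>a x y. u a (x * y) = u a x * y"
    and v_mult: "\<And>a x y. v a (x * y) = x * v a y"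
    and uv: "\<And>a x y. v a x * y = x * u a y"
    and comm: "\<And>a b x. u a (v b x) = v b (u a x)"
    and curvU: "\<And>a b x. u a (u b x) = u (a*b) x + h a b * x"
    and curvV: "\<And>a b x. v b (v a x) = v (a*b) x + x * h a b"
  defines "hh \<equiv> \<lambda>a b. h a b + u a (t b) + v b (t a) + t a * t b - t (a*b)"
  shows "u a1 (h a2 a3) - h (a1*a2) a3 + h a1 (a2*a3) - v a3 (h a1 a2) =
     (u a1 (hh a2 a3) + t a1 * hh a2 a3) - hh (a1*a2) a3 + hh a1 (a2*a3) - (v a3 (hh a1 a2) + hh a1 a2 * t a3)"
  unfolding hh_def
  by (simp add: u_add u_diff v_add v_diff u_mult v_mult uv comm curvU curvV algebra_simps mult.assoc)

lemma add_hom_diff: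
  fixes f :: "'x::ab_group_add \<Rightarrow> 'y::ab_group_add"
  assumes "\<And>x y. f (x + y) = f x + f y"
  shows "f (x - y) = f x - f y"
  by (metis assms add_diff_cancel eq_diff_eq)

theorem mainTheorem8:
  fixes sA :: "'f::field \<Rightarrow> 'a::ring \<Rightarrow> 'a"
    and sK :: "'f \<Rightarrow> 'k::ring \<Rightarrow> 'k"
    and xi :: "'a \<Rightarrow> 'k bimul set"
  assumes "algebra_over sA" and "algebra_over sK"
    and "coupling sA sK xi"
    and "\<exists>mu. bimul_law sA sK xi mu"
  shows "\<forall>mu h mu' h'. bimul_law sA sK xi mu \<longrightarrow> hindrance sA sK mu h \<longrightarrow>
           bimul_law sA sK xi mu' \<longrightarrow> hindrance sA sK mu' h' \<longrightarrow>
           same_HH3_class sA sK mu (obs_cochain mu h) (obs_cochain mu' h')"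
proof (intro allI impI)
  fix mu h mu' h'
  assume L: "bimul_law sA sK xi mu" and H: "hindrance sA sK mu h"
    and L': "bimul_law sA sK xi mu'" and H': "hindrance sA sK mu' h'"
  have A: "algebra_over sA" and K: "algebra_over sK" by fact+
  have vA: "vector_space sA" and vK: "vector_space sK"
    using A K unfolding algebra_over_def by auto
  have Kscl1: "\<And>c x y. sK c x * y = sK c (x * y)" and Kscl2: "\<And>c x y. x * sK c y = sK c (x * y)"
    using K unfolding algebra_over_def by metis+
  have Ascl1: "\<And>c x y. sA c x * y = sA c (x * y)" and Ascl2: "\<And>c x y. x * sA c y = sA c (x * y)"
    using A unfolding algebra_over_def by metis+
  interpret vK: vector_space sK by (rule vK)
  define u where "u = (\<lambda>a. fst (mu a))"
  define v where "v = (\<lambda>a. snd (mu a))"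
  define u' where "u' = (\<lambda>a. fst (mu' a))"
  define v' where "v' = (\<lambda>a. snd (mu' a))"
  have bm: "\<And>a. is_bimul sK (mu a)" and bm': "\<And>a. is_bimul sK (mu' a)"
    using L L' unfolding bimul_law_def Mul_def by auto
  have ul: "\<And>a. Vector_Spaces.linear sK sK (u a)" and vl: "\<And>a. Vector_Spaces.linear sK sK (v a)"
    using bm unfolding is_bimul_def u_def v_def by auto
  have u_add: "\<And>a x y. u a (x + y) = u a x + u a y" and u_scl: "\<And>a c x. u a (sK c x) = sK c (u a x)"
    using ul unfolding Vector_Spaces.linear_iff by auto
  have v_add: "\<And>a x y. v a (x + y) = v a x + v a y" and v_scl: "\<And>a c x. v a (sK c x) = sK c (v a x)"
    using vl unfolding Vector_Spaces.linear_iff by auto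
  have u_diff: "\<And>a x y. u a (x - y) = u a x - u a y" by (rule add_hom_diff, rule u_add)
  have v_diff: "\<And>a x y. v a (x - y) = v a x - v a y" by (rule add_hom_diff, rule v_add)
  have u_mult: "\<And>a x y. u a (x * y) = u a x * y" and v_mult: "\<And>a x y. v a (x * y) = x * v a y"
    and uv: "\<And>a x y. v a x * y = x * u a y"
    using bm unfolding is_bimul_def u_def v_def by auto
  have comm: "\<And>a b x. u a (v b x) = v b (u a x)"
    using L unfolding bimul_law_def u_def v_def by (metis comp_apply)
  have uA: "\<And>a b x. u (a + b) x = u a x + u b x" and vA': "\<And>a b x. v (a + b) x = v a x + v b x"
    using L unfolding bimul_law_def u_def v_def mul_add_def by auto
  have uS: "\<And>c a x. u (sA c a) x = sK c (u a x)" and vS: "\<And>c a x. v (sA c a) x = sK c (v a x)"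
    using L unfolding bimul_law_def u_def v_def mul_scale_def by auto
  have u'A: "\<And>a b x. u' (a + b) x = u' a x + u' b x" and v'A: "\<And>a b x. v' (a + b) x = v' a x + v' b x"
    using L' unfolding bimul_law_def u'_def v'_def mul_add_def by auto
  have u'S: "\<And>c a x. u' (sA c a) x = sK c (u' a x)" and v'S: "\<And>c a x. v' (sA c a) x = sK c (v' a x)"
    using L' unfolding bimul_law_def u'_def v'_def mul_scale_def by auto
  have curv: "\<And>a b. eps (h a b) = curvature mu a b" and curv': "\<And>a b. eps (h' a b) = curvature mu' a b"
    using H H' unfolding hindrance_def by auto
  have curvU: "\<And>a b x. u a (u b x) = u (a*b) x + h a b * x"
  proof -
    fix a b x
    from arg_cong[OF curv[of a b], of "\<lambda>m. fst m x"]
    show "u a (u b x) = u (a*b) x + h a b * x"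
      unfolding eps_def curvature_def mul_diff_def mul_mult_def u_def by (simp add: algebra_simps)
  qed
  have curvV: "\<And>a b x. v b (v a x) = v (a*b) x + x * h a b"
  proof -
    fix a b x
    from arg_cong[OF curv[of a b], of "\<lambda>m. snd m x"]
    show "v b (v a x) = v (a*b) x + x * h a b"
      unfolding eps_def curvature_def mul_diff_def mul_mult_def v_def by (simp add: algebra_simps)
  qed
  have curvU': "\<And>a b x. u' a (u' b x) = u' (a*b) x + h' a b * x"
  proof -
    fix a b x
    from arg_cong[OF curv'[of a b], of "\<lambda>m. fst m x"]
    show "u' a (u' b x) = u' (a*b) x + h' a b * x"
      unfolding eps_def curvature_def mul_diff_def mul_mult_def u'_def by (simp add: algebra_simps)
  qed
  have curvV': "\<And>a b x. v' b (v' a x) = v' (a*b) x + x * h' a b"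
  proof -
    fix a b x
    from arg_cong[OF curv'[of a b], of "\<lambda>m. snd m x"]
    show "v' b (v' a x) = v' (a*b) x + x * h' a b"
      unfolding eps_def curvature_def mul_diff_def mul_mult_def v'_def by (simp add: algebra_simps)
  qed
  have ex: "\<exists>k. \<forall>x. k * x = u' a x - u a x \<and> x * k = v' a x - v a x" for a
  proof -
    have e0: "mul_add (mu' a) (eps 0) = mu' a"
      unfolding mul_add_def eps_def by simp
    have "mu' a \<in> natural (mu' a)"
      unfolding natural_def Inn_def using e0 by (metis (mono_tags, lifting) mem_Collect_eq rangeI)
    also have "natural (mu' a) = natural (mu a)"
      using L L' unfolding bimul_law_def by simp
    finally obtain k where "mu' a = mul_add (mu a) (eps k)"
      unfolding natural_def Inn_def by auto
    then have "\<forall>x. u' a x = u a x + k * x \<and> v' a x = v a x + x * k"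
      unfolding u'_def v'_def u_def v_def mul_add_def eps_def by simp
    then show ?thesis by (metis add_diff_cancel_left')
  qed
  obtain t where lt: "Vector_Spaces.linear sA sK t"
    and tt: "\<And>a x. t a * x = u' a x - u a x \<and> x * t a = v' a x - v a x"
  proof -
    have "\<exists>t. Vector_Spaces.linear sA sK t \<and> (\<forall>a x. t a * x = u' a x - u a x \<and> x * t a = v' a x - v a x)"
      by (rule lift_linear[OF A K]) (auto simp: uA u'A uS u'S vA' v'A vS v'S ex vK.scale_right_diff_distrib)
    then show ?thesis using that by blast
  qed
  have u'e: "\<And>a x. u' a x = u a x + t a * x" and v'e: "\<And>a x. v' a x = v a x + x * t a"
    using tt by auto
  have tadd: "\<And>a b. t (a + b) = t a + t b" and tscl: "\<And>c a. t (sA c a) = sK c (t a)"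
    using lt unfolding Vector_Spaces.linear_iff by auto
  have tdiff: "\<And>a b. t (a - b) = t a - t b" by (rule add_hom_diff, rule tadd)
  define hh where "hh = (\<lambda>a b. h a b + u a (t b) + v b (t a) + t a * t b - t (a*b))"
  define g where "g = (\<lambda>a b. hh a b - h' a b)"
  have gL: "g a b * x = 0" for a b x
  proof -
    have "h' a b * x = u' a (u' b x) - u' (a*b) x" using curvU' by simp
    also have "\<dots> = hh a b * x"
      unfolding hh_def u'e by (simp add: u_add curvU u_mult uv algebra_simps mult.assoc)
    finally show ?thesis unfolding g_def by (simp add: algebra_simps)
  qed
  have gR: "x * g a b = 0" for a b x
  proof -
    have "x * h' a b = v' b (v' a x) - v' (a*b) x" using curvV' by simp
    also have "\<dots> = x * hh a b"
      unfolding hh_def v'e by (simp add: v_add curvV v_mult uv[symmetric] algebra_simps mult.assoc)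
    finally show ?thesis unfolding g_def by (simp add: algebra_simps)
  qed
  have hb: "bilinear_map sA sK h" and hb': "bilinear_map sA sK h'"
    using H H' unfolding hindrance_def by auto
  have hA1: "\<And>a a' b. h (a + a') b = h a b + h a' b" and hS1: "\<And>c a b. h (sA c a) b = sK c (h a b)"
    and hA2: "\<And>a b b'. h a (b + b') = h a b + h a b'" and hS2: "\<And>c a b. h a (sA c b) = sK c (h a b)"
    using hb unfolding bilinear_map_def Vector_Spaces.linear_iff by auto
  have h'A1: "\<And>a a' b. h' (a + a') b = h' a b + h' a' b" and h'S1: "\<And>c a b. h' (sA c a) b = sK c (h' a b)"
    and h'A2: "\<And>a b b'. h' a (b + b') = h' a b + h' a b'" and h'S2: "\<And>c a b. h' a (sA c b) = sK c (h' a b)"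
    using hb' unfolding bilinear_map_def Vector_Spaces.linear_iff by auto
  have gA2: "\<And>a b b'. g a (b + b') = g a b + g a b'"
    unfolding g_def hh_def by (simp add: hA2 h'A2 u_add vA' tadd distrib_left distrib_right algebra_simps)
  have gA1: "\<And>a b b'. g (a + b') b = g a b + g b' b"
    unfolding g_def hh_def by (simp add: hA1 h'A1 uA v_add tadd distrib_left distrib_right algebra_simps)
  have gS2: "\<And>c a b. g a (sA c b) = sK c (g a b)"
    unfolding g_def hh_def
    by (simp add: hS2 h'S2 u_scl vS tscl Kscl1 Kscl2 Ascl2 vK.scale_right_distrib vK.scale_right_diff_distrib)
  have gS1: "\<And>c a b. g (sA c a) b = sK c (g a b)"
    unfolding g_def hh_def
    by (simp add: hS1 h'S1 uS v_scl tscl Kscl1 Kscl2 Ascl1 vK.scale_right_distrib vK.scale_right_diff_distrib)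
  have gC: "g \<in> hoch_C2 sA sK"
    unfolding hoch_C2_def bilinear_map_def Vector_Spaces.linear_iff Anni_def
    using vA vK gA1 gA2 gS1 gS2 gL gR by auto
  have h'e: "\<And>a b. h' a b = hh a b - g a b" unfolding g_def by simp
  have eq: "obs_cochain mu h a1 a2 a3 - obs_cochain mu' h' a1 a2 a3 = hoch_delta2 mu g a1 a2 a3" for a1 a2 a3
  proof -
    have k: "u a1 (h a2 a3) - h (a1*a2) a3 + h a1 (a2*a3) - v a3 (h a1 a2) =
     (u a1 (hh a2 a3) + t a1 * hh a2 a3) - hh (a1*a2) a3 + hh a1 (a2*a3) - (v a3 (hh a1 a2) + hh a1 a2 * t a3)"
      unfolding hh_def by (rule key_identity[OF u_add u_diff v_add v_diff u_mult v_mult uv comm curvU curvV])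
    have o1: "obs_cochain mu h a1 a2 a3 = u a1 (h a2 a3) - h (a1*a2) a3 + h a1 (a2*a3) - v a3 (h a1 a2)"
      unfolding obs_cochain_def u_def v_def by simp
    have o2: "obs_cochain mu' h' a1 a2 a3 = u' a1 (h' a2 a3) - h' (a1*a2) a3 + h' a1 (a2*a3) - v' a3 (h' a1 a2)"
      unfolding obs_cochain_def u'_def v'_def by simp
    have o3: "hoch_delta2 mu g a1 a2 a3 = u a1 (g a2 a3) - g (a1*a2) a3 + g a1 (a2*a3) - v a3 (g a1 a2)"
      unfolding hoch_delta2_def u_def v_def by simp
    show ?thesis
      unfolding o1 o2 o3 k h'e u'e v'e
      by (simp add: u_diff v_diff right_diff_distrib left_diff_distrib gL gR algebra_simps)
  qed
  show "same_HH3_class sA sK mu (obs_cochain mu h) (obs_cochain mu' h')"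
    unfolding same_HH3_class_def using gC eq by blast
qed

end
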